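(* If $G$ is a connected $(C_4,\text{diamond})$-free graph and $1\le k\le|V(G)|-1$, then $F_k(G)$ is a prime graph.
   Context: $F_k(G)$ is the graph on the $k$-subsets of $V(G)$ with $A,B$ adjacent iff $A\triangle B$ is an edge of $G$. A diamond is $K_4$ minus an edge; $(C_4,\text{diamond})$-free means no induced $4$-cycle and no induced diamond. A graph is composite if it is isomorphic to the Cartesian product of two or more nontrivial graphs, and prime otherwise. *)

theory Defs
  imports Main
begin

definition simple_graph :: "'a set \<Rightarrow> ('a \<Rightarrow> 'a \<Rightarrow> bool) \<Rightarrow> bool" where
  "simple_graph V E \<longleftrightarrow> finite V \<and>
     (\<forall>x y. E x y \<longrightarrow> x \<in> V \<and> y \<in> V \<and> x \<noteq> y) \<and>
     (\<forall>x y. E x y \<longrightarrow> E y x)"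

definition connected_graph :: "'a set \<Rightarrow> ('a \<Rightarrow> 'a \<Rightarrow> bool) \<Rightarrow> bool" where
  "connected_graph V E \<longleftrightarrow> V \<noteq> {} \<and> (\<forall>x\<in>V. \<forall>y\<in>V. E\<^sup>*\<^sup>* x y)"

definition C4_free :: "'a set \<Rightarrow> ('a \<Rightarrow> 'a \<Rightarrow> bool) \<Rightarrow> bool" where
  "C4_free V E \<longleftrightarrow> \<not> (\<exists>a\<in>V. \<exists>b\<in>V. \<exists>c\<in>V. \<exists>d\<in>V. distinct [a, b, c, d] \<and>
     E a b \<and> E b c \<and> E c d \<and> E d a \<and> \<not> E a c \<and> \<not> E b d)"

definition diamond_free :: "'a set \<Rightarrow> ('a \<Rightarrow> 'a \<Rightarrow> bool) \<Rightarrow> bool" where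
  "diamond_free V E \<longleftrightarrow> \<not> (\<exists>a\<in>V. \<exists>b\<in>V. \<exists>c\<in>V. \<exists>d\<in>V. distinct [a, b, c, d] \<and>
     E a b \<and> E a c \<and> E a d \<and> E b c \<and> E b d \<and> \<not> E c d)"

definition token_vertices :: "'a set \<Rightarrow> nat \<Rightarrow> 'a set set" where
  "token_vertices V k = {A. A \<subseteq> V \<and> card A = k}"

definition token_edges :: "'a set \<Rightarrow> ('a \<Rightarrow> 'a \<Rightarrow> bool) \<Rightarrow> nat \<Rightarrow> 'a set \<Rightarrow> 'a set \<Rightarrow> bool" where
  "token_edges V E k A B \<longleftrightarrow> A \<in> token_vertices V k \<and> B \<in> token_vertices V k \<and>
     (\<exists>a b. (A - B) \<union> (B - A) = {a, b} \<and> E a b)"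

definition cart_edges :: "('a \<Rightarrow> 'a \<Rightarrow> bool) \<Rightarrow> ('b \<Rightarrow> 'b \<Rightarrow> bool) \<Rightarrow> 'a \<times> 'b \<Rightarrow> 'a \<times> 'b \<Rightarrow> bool" where
  "cart_edges E1 E2 p q \<longleftrightarrow> (fst p = fst q \<and> E2 (snd p) (snd q)) \<or> (snd p = snd q \<and> E1 (fst p) (fst q))"

definition graph_iso :: "'a set \<Rightarrow> ('a \<Rightarrow> 'a \<Rightarrow> bool) \<Rightarrow> 'b set \<Rightarrow> ('b \<Rightarrow> 'b \<Rightarrow> bool) \<Rightarrow> bool" where
  "graph_iso V E W F \<longleftrightarrow> (\<exists>f. bij_betw f V W \<and> (\<forall>x\<in>V. \<forall>y\<in>V. E x y \<longleftrightarrow> F (f x) (f y)))"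

definition nontrivial_graph :: "'a set \<Rightarrow> ('a \<Rightarrow> 'a \<Rightarrow> bool) \<Rightarrow> bool" where
  "nontrivial_graph V E \<longleftrightarrow> simple_graph V E \<and> card V \<ge> 2"

text \<open>Composite: isomorphic to the Cartesian product of two nontrivial (finite simple)
graphs (a product of two or more nontrivial factors is a product of two nontrivial
factors). Since all graphs are finite, factors are taken, w.l.o.g., with vertices in nat.\<close>
definition composite_graph :: "'a set \<Rightarrow> ('a \<Rightarrow> 'a \<Rightarrow> bool) \<Rightarrow> bool" where
  "composite_graph V E \<longleftrightarrow> (\<exists>(V1::nat set) E1 (V2::nat set) E2.
     nontrivial_graph V1 E1 \<and> nontrivial_graph V2 E2 \<and>
     graph_iso V E (V1 \<times> V2) (cart_edges E1 E2))"

definition prime_graph :: "'a set \<Rightarrow> ('a \<Rightarrow> 'a \<Rightarrow> bool) \<Rightarrow> bool" where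
  "prime_graph V E \<longleftrightarrow> \<not> composite_graph V E"

end

theory Submission
  imports Defs
begin


lemma sg_sym: "simple_graph V E \<Longrightarrow> E x y \<Longrightarrow> E y x"
  unfolding simple_graph_def by blast
lemma sg_irr: "simple_graph V E \<Longrightarrow> E x y \<Longrightarrow> x \<noteq> y"
  unfolding simple_graph_def by blast
lemma sg_in: "simple_graph V E \<Longrightarrow> E x y \<Longrightarrow> x \<in> V \<and> y \<in> V"
  unfolding simple_graph_def by blast

lemma tok_move:
  assumes "simple_graph V E" "A \<in> token_vertices V k" "a \<in> A" "b \<notin> A" "E a b"
  shows "insert b (A - {a}) \<in> token_vertices V k \<and> token_edges V E k A (insert b (A - {a}))"
proof -
  have fin: "finite V" using assms(1) unfolding simple_graph_def by blast
  have AV: "A \<subseteq> V" and cA: "card A = k" using assms(2) unfolding token_vertices_def by auto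
  have fA: "finite A" using AV fin finite_subset by blast
  have bV: "b \<in> V" using sg_in[OF assms(1,5)] by blast
  have c: "card (insert b (A - {a})) = k"
  proof -
    have "card (insert b (A - {a})) = Suc (card (A - {a}))" using fA assms(4) by simp
    moreover have "card (A - {a}) = card A - 1" using assms(3) by simp
    moreover have "card A \<ge> 1" using fA assms(3) card_gt_0_iff by (metis One_nat_def Suc_leI empty_iff)
    ultimately show ?thesis using cA by simp
  qed
  have m: "insert b (A - {a}) \<in> token_vertices V k" using c AV bV unfolding token_vertices_def by auto
  have "(A - insert b (A - {a})) \<union> (insert b (A - {a}) - A) = {a, b}" using assms(3,4) by auto
  then show ?thesis using m assms(2,5) unfolding token_edges_def by blast
qed

lemma diff2:
  assumes fA: "finite A" "finite B" and ce: "card (A - B) = card (B - A)"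
    and xy: "(A - B) \<union> (B - A) = {x, y}" and that: "x \<in> A - B"
  shows "A - B = {x} \<and> B - A = {y}"
proof -
    have "y \<notin> A - B"
    proof
      assume "y \<in> A - B"
      then have "B - A = {}" using xy(1) that by blast
      then have z: "card (B - A) = 0" by (simp only: card.empty)
      have "A - B \<noteq> {}" "finite (A - B)" using that fA by auto
      then have "card (A - B) \<ge> 1" by (simp add: Suc_le_eq card_gt_0_iff)
      then show False using ce z by linarith
    qed
    then have yB: "y \<in> B - A" using xy(1) by (metis Un_iff insertCI)
    have s1: "A - B \<subseteq> {x}" using xy(1) \<open>y \<notin> A - B\<close> by blast
    have s2: "B - A \<subseteq> {y}" using xy(1) that by blast
    show ?thesis using s1 s2 that yB by blast
qed

lemma tok_adj:
  assumes "simple_graph V E" "token_edges V E k A B"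
  shows "\<exists>a b. a \<in> A \<and> b \<notin> A \<and> E a b \<and> B = insert b (A - {a})"
proof -
  have fin: "finite V" using assms(1) unfolding simple_graph_def by blast
  obtain x y where xy: "(A - B) \<union> (B - A) = {x, y}" "E x y"
    and A: "A \<in> token_vertices V k" and B: "B \<in> token_vertices V k"
    using assms(2) unfolding token_edges_def by blast
  have fA: "finite A" "finite B" "card A = card B"
    using A B fin finite_subset unfolding token_vertices_def by auto
  have ce: "card (A - B) = card (B - A)"
    proof -
    have "card (A - B) = card A - card (A \<inter> B)" using fA by (simp add: card_Diff_subset_Int)
    moreover have "card (B - A) = card B - card (B \<inter> A)" using fA by (simp add: card_Diff_subset_Int)
    moreover have "B \<inter> A = A \<inter> B" by blast
    ultimately show ?thesis using fA by simp
  qed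
  have neq: "x \<noteq> y" using sg_irr[OF assms(1) xy(2)] .
  have case1: "A - B = {x} \<and> B - A = {y}" if "x \<in> A - B"
    using diff2[OF fA(1,2) ce xy(1) that] .
  have case2: "B - A = {x} \<and> A - B = {y}" if "x \<in> B - A"
    using diff2[OF fA(2,1) ce[symmetric] _ that] xy(1) by (simp add: Un_commute)
  have "x \<in> A - B \<or> x \<in> B - A" using xy(1) by auto
  then show ?thesis
  proof
    assume h: "x \<in> A - B"
    then have "A - B = {x}" "B - A = {y}" using case1 by auto
    then have "B = insert y (A - {x})" by auto
    then show ?thesis using h \<open>B - A = {y}\<close> xy(2) by blast
  next
    assume h: "x \<in> B - A"
    then have "B - A = {x}" "A - B = {y}" using case2 by auto
    then have "B = insert x (A - {y})" by auto
    then show ?thesis using h \<open>A - B = {y}\<close> sg_sym[OF assms(1) xy(2)] by blast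
  qed
qed

lemma tok_rt_mem: "(token_edges V E k)\<^sup>*\<^sup>* A B \<Longrightarrow> A \<in> token_vertices V k \<Longrightarrow> B \<in> token_vertices V k"
  by (induction rule: rtranclp_induct) (auto simp: token_edges_def)

lemma tok_reach:
  assumes sg: "simple_graph V E" and p: "E\<^sup>*\<^sup>* x y"
  shows "A \<in> token_vertices V k \<Longrightarrow> x \<in> A \<Longrightarrow> y \<notin> A \<Longrightarrow>
         (token_edges V E k)\<^sup>*\<^sup>* A (insert y (A - {x}))"
  using p
proof (induction arbitrary: A rule: converse_rtranclp_induct)
  case base
  then show ?case by auto
next
  case (step x z)
  note mv = tok_move[OF sg]
  show ?case
  proof (cases "z \<in> A")
    case True
    have r1: "(token_edges V E k)\<^sup>*\<^sup>* A (insert y (A - {z}))" using step(3)[OF step(4) True step(6)] .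
    have zy: "z \<noteq> y" using True step by auto
    have xz: "x \<noteq> z" using sg_irr[OF sg step(1)] .
    have m: "insert y (A - {z}) \<in> token_vertices V k" using tok_rt_mem r1 step(4) by blast
    have "insert z (insert y (A - {z}) - {x}) = insert y (A - {x})" using True step(5,6) xz zy by auto
    moreover have "token_edges V E k (insert y (A - {z})) (insert z (insert y (A - {z}) - {x}))"
      using mv[OF m, of x z] step(1,5) xz zy by auto
    ultimately show ?thesis using rtranclp.rtrancl_into_rtrancl[OF r1] by simp
  next
    case False
    have e: "token_edges V E k A (insert z (A - {x}))" and m: "insert z (A - {x}) \<in> token_vertices V k"
      using mv[OF step(4,5) False step(1)] by auto
    show ?thesis
    proof (cases "y = z")
      case True then show ?thesis using e by auto
    next
      case yz: False
      have "(token_edges V E k)\<^sup>*\<^sup>* (insert z (A - {x})) (insert y (insert z (A - {x}) - {z}))"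
        using step(3)[OF m] step(6) yz by auto
      moreover have "insert y (insert z (A - {x}) - {z}) = insert y (A - {x})" using False step(5) by auto
      ultimately show ?thesis using converse_rtranclp_into_rtranclp[where r="token_edges V E k", OF e] by simp
    qed
  qed
qed

lemma tok_conn:
  assumes sg: "simple_graph V E" and cg: "connected_graph V E"
  shows "A \<in> token_vertices V k \<Longrightarrow> B \<in> token_vertices V k \<Longrightarrow> (token_edges V E k)\<^sup>*\<^sup>* A B"
proof (induction "card (A - B)" arbitrary: A rule: less_induct)
  case less
  have fin: "finite V" using assms(1) unfolding simple_graph_def by blast
  have fA: "finite A" "finite B" "card A = card B" "A \<subseteq> V" "B \<subseteq> V"
    using less.prems fin finite_subset unfolding token_vertices_def by auto
  have ce: "card (A - B) = card (B - A)"
    proof -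
    have "card (A - B) = card A - card (A \<inter> B)" using fA by (simp add: card_Diff_subset_Int)
    moreover have "card (B - A) = card B - card (B \<inter> A)" using fA by (simp add: card_Diff_subset_Int)
    moreover have "B \<inter> A = A \<inter> B" by blast
    ultimately show ?thesis using fA by simp
  qed
  show ?case
  proof (cases "A = B")
    case True then show ?thesis by auto
  next
    case False
    then have "A - B \<noteq> {}" using ce fA
      by (metis Diff_eq_empty_iff card_0_eq finite_Diff subset_antisym)
    then obtain a where a: "a \<in> A" "a \<notin> B" by blast
    have "B - A \<noteq> {}" using ce fA \<open>A - B \<noteq> {}\<close> by (metis card_0_eq finite_Diff)
    then obtain b where b: "b \<in> B" "b \<notin> A" by blast
    have "E\<^sup>*\<^sup>* a b" using cg a b fA unfolding connected_graph_def by blast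
    then have r: "(token_edges V E k)\<^sup>*\<^sup>* A (insert b (A - {a}))"
      using tok_reach[OF sg] less.prems a b by blast
    have m: "insert b (A - {a}) \<in> token_vertices V k"
      using r less.prems(1) tok_rt_mem by blast
    have "insert b (A - {a}) - B = (A - B) - {a}" using a b by auto
    then have "card (insert b (A - {a}) - B) < card (A - B)" using a fA
      by (metis Diff_iff card_Diff1_less finite_Diff)
    then have "(token_edges V E k)\<^sup>*\<^sup>* (insert b (A - {a})) B" using less.hyps m less.prems(2) by blast
    then show ?thesis using r by auto
  qed
qed



lemma tok_sym: "simple_graph V E \<Longrightarrow> token_edges V E k A B \<Longrightarrow> token_edges V E k B A"
  unfolding token_edges_def by (metis Un_commute insert_commute sg_sym)

lemma tok_irr: "token_edges V E k A A \<Longrightarrow> False"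
  unfolding token_edges_def by auto

locale prodiso =
  fixes TV :: "'v set" and T :: "'v \<Rightarrow> 'v \<Rightarrow> bool"
    and V1 :: "nat set" and E1 :: "nat \<Rightarrow> nat \<Rightarrow> bool"
    and V2 :: "nat set" and E2 :: "nat \<Rightarrow> nat \<Rightarrow> bool"
    and f :: "'v \<Rightarrow> nat \<times> nat"
  assumes bij: "bij_betw f TV (V1 \<times> V2)"
    and adj: "\<And>x y. x \<in> TV \<Longrightarrow> y \<in> TV \<Longrightarrow> T x y \<longleftrightarrow> cart_edges E1 E2 (f x) (f y)"
    and s1: "simple_graph V1 E1" and s2: "simple_graph V2 E2"
    and Tin: "\<And>x y. T x y \<Longrightarrow> x \<in> TV \<and> y \<in> TV"
begin

definition col where "col A B \<longleftrightarrow> fst (f A) \<noteq> fst (f B)"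

lemma col_sym: "col A B = col B A" unfolding col_def by auto

lemma edge:
  assumes "T A B"
  shows "(col A B \<and> snd (f A) = snd (f B) \<and> E1 (fst (f A)) (fst (f B))) \<or>
         (\<not> col A B \<and> fst (f A) = fst (f B) \<and> E2 (snd (f A)) (snd (f B)))"
proof -
  have c: "cart_edges E1 E2 (f A) (f B)" using adj[of A B] Tin[OF assms] assms by blast
  show ?thesis
  proof (cases "fst (f A) = fst (f B)")
    case True
    then show ?thesis using c sg_irr[OF s1] unfolding cart_edges_def col_def by auto
  next
    case False
    then show ?thesis using c unfolding cart_edges_def col_def by auto
  qed
qed

lemma inj: "A \<in> TV \<Longrightarrow> B \<in> TV \<Longrightarrow> f A = f B \<Longrightarrow> A = B"
  using bij unfolding bij_betw_def inj_on_def by blast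

lemma R1:
  assumes "T A P" "T A Q" "T P Q" shows "col A P = col A Q"
proof (rule ccontr)
  assume ne: "col A P \<noteq> col A Q"
  have e1: "snd (f A) \<noteq> snd (f Q) \<and> fst (f A) = fst (f Q)" if "\<not> col A Q" using edge[OF assms(2)] that sg_irr[OF s2] by blast
  have e2: "snd (f A) \<noteq> snd (f P) \<and> fst (f A) = fst (f P)" if "\<not> col A P" using edge[OF assms(1)] that sg_irr[OF s2] by blast
  have e3: "snd (f A) = snd (f Q) \<and> fst (f A) \<noteq> fst (f Q)" if "col A Q" using edge[OF assms(2)] that col_def by blast
  have e4: "snd (f A) = snd (f P) \<and> fst (f A) \<noteq> fst (f P)" if "col A P" using edge[OF assms(1)] that col_def by blast
  have e5: "snd (f P) = snd (f Q) \<or> fst (f P) = fst (f Q)" using edge[OF assms(3)] by blast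
  show False using ne e1 e2 e3 e4 e5 by (cases "col A P") auto
qed

lemma R2ex0:
  assumes "T A P" "T A Q" "col A P" "\<not> col A Q"
  shows "\<exists>Y\<in>TV. T Y P \<and> T Y Q \<and> Y \<noteq> A"
proof -
  have P: "P \<in> TV" and Q: "Q \<in> TV" and A: "A \<in> TV" using Tin assms by auto
  have eP: "snd (f A) = snd (f P)" "E1 (fst (f A)) (fst (f P))" using edge[OF assms(1)] assms(3) by auto
  have eQ: "fst (f A) = fst (f Q)" "E2 (snd (f A)) (snd (f Q))" using edge[OF assms(2)] assms(4) by auto
  have fP: "f P \<in> V1 \<times> V2" "f Q \<in> V1 \<times> V2" using bij_betw_apply[OF bij P] bij_betw_apply[OF bij Q] by auto
  define z where "z = (fst (f P), snd (f Q))"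
  have z: "z \<in> V1 \<times> V2" using fP unfolding z_def by (auto simp: mem_Times_iff)
  define Y where "Y = inv_into TV f z"
  have zi: "z \<in> f ` TV" using z bij_betw_imp_surj_on[OF bij] by simp
  have Y: "Y \<in> TV" "f Y = z" unfolding Y_def using inv_into_into[OF zi] f_inv_into_f[OF zi] by auto
  have "T Y P" using adj[OF Y(1) P] Y(2) eP eQ sg_sym[OF s2] unfolding z_def cart_edges_def by auto
  moreover have "T Y Q" using adj[OF Y(1) Q] Y(2) eP eQ sg_sym[OF s1] unfolding z_def cart_edges_def by auto
  moreover have "Y \<noteq> A" using Y(2) assms(3) eQ unfolding z_def col_def by auto
  ultimately show ?thesis using Y(1) by blast
qed

lemma R2ex:
  assumes "T A P" "T A Q" "col A P \<noteq> col A Q"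
  shows "\<exists>Y\<in>TV. T Y P \<and> T Y Q \<and> Y \<noteq> A"
  using R2ex0[OF assms(1,2)] R2ex0[OF assms(2,1)] assms(3) by blast

lemma R2'0:
  assumes "T A P" "T A Q" "col A P" "\<not> col A Q" "T Y P" "T Y Q" "Y \<noteq> A"
  shows "col Y Q \<and> \<not> col Y P"
proof -
  have A: "A \<in> TV" and Y: "Y \<in> TV" using Tin assms by auto
  have eP: "snd (f A) = snd (f P)" "fst (f A) \<noteq> fst (f P)" using edge[OF assms(1)] assms(3) col_def by auto
  have eQ: "fst (f A) = fst (f Q)" "snd (f A) \<noteq> snd (f Q)" using edge[OF assms(2)] assms(4) sg_irr[OF s2] by blast+
  have fA: "f Y \<noteq> f A" using inj[OF A Y] assms(7) by auto
  have "fst (f Y) = fst (f P) \<or> snd (f Y) = snd (f P)" using edge[OF assms(5)] by auto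
  moreover have "fst (f Y) = fst (f Q) \<or> snd (f Y) = snd (f Q)" using edge[OF assms(6)] by auto
  ultimately have "fst (f Y) = fst (f P) \<and> snd (f Y) = snd (f Q)"
    using eP eQ fA by (auto simp: prod_eq_iff)
  then show ?thesis using eP eQ unfolding col_def by auto
qed

lemma R2':
  assumes "T A P" "T A Q" "col A P \<noteq> col A Q" "T Y P" "T Y Q" "Y \<noteq> A"
  shows "col Y Q = col A P \<and> col Y P = col A Q"
  using R2'0[OF assms(1,2) _ _ assms(4,5,6)] R2'0[OF assms(2,1) _ _ assms(5,4,6)] assms(3) by blast

lemma path_fst: "T\<^sup>*\<^sup>* X Y \<Longrightarrow> (\<forall>P Q. T P Q \<longrightarrow> \<not> col P Q) \<Longrightarrow> fst (f X) = fst (f Y)"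
  by (induction rule: rtranclp_induct) (auto simp: col_def)

lemma path_snd: "T\<^sup>*\<^sup>* X Y \<Longrightarrow> (\<forall>P Q. T P Q \<longrightarrow> col P Q) \<Longrightarrow> snd (f X) = snd (f Y)"
proof (induction rule: rtranclp_induct)
  case (step y z)
  then show ?case using edge[OF step(2)] by auto
qed auto

end



lemma no2:
  assumes sg: "simple_graph V E" and c4: "C4_free V E" and dm: "diamond_free V E"
    and "\<not> E p q" "p \<noteq> q" "E u p" "E u q" "E w p" "E w q" "u \<noteq> w"
  shows False
proof -
  have V: "u \<in> V" "w \<in> V" "p \<in> V" "q \<in> V" using sg_in[OF sg] assms by blast+
  have d: "distinct [u, w, p, q]" "distinct [u, p, w, q]"
    using assms sg_irr[OF sg] by auto
  show False
  proof (cases "E u w")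
    case True
    then show False using dm V d assms unfolding diamond_free_def by blast
  next
    case False
    have "E p w" "E q u" using assms sg_sym[OF sg] by blast+
    then show False using c4 V d assms False sg_sym[OF sg] unfolding C4_free_def by blast
  qed
qed

locale tokprod = prodiso "token_vertices V k" "token_edges V E k" V1 E1 V2 E2 f
  for V :: "'a set" and E and k and V1 E1 V2 E2 f +
  assumes sg: "simple_graph V E" and cg: "connected_graph V E"
    and c4: "C4_free V E" and dm: "diamond_free V E"
begin

abbreviation "TV \<equiv> token_vertices V k"
abbreviation "T \<equiv> token_edges V E k"

lemma mv: "A \<in> TV \<Longrightarrow> a \<in> A \<Longrightarrow> b \<notin> A \<Longrightarrow> E a b \<Longrightarrow> insert b (A - {a}) \<in> TV \<and> T A (insert b (A - {a}))"
  using tok_move[OF sg] by blast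

lemma gen:
  assumes B: "B = insert p D" and C: "C = insert q D" and "p \<notin> D" "q \<notin> D" "p \<noteq> q"
    and XB: "T X B" and XC: "T X C"
  shows "(\<exists>z. z \<notin> D \<and> X = insert z D \<and> E p z \<and> E q z) \<or>
         (\<exists>w\<in>D. X = insert p (insert q (D - {w})) \<and> E w p \<and> E w q) \<or> E p q"
proof -
  obtain u v where uv: "u \<in> B" "v \<notin> B" "E u v" "X = insert v (B - {u})"
    using tok_adj[OF sg tok_sym[OF sg XB]] by blast
  obtain s t where st: "s \<in> C" "t \<notin> C" "E s t" "X = insert t (C - {s})"
    using tok_adj[OF sg tok_sym[OF sg XC]] by blast
  have memX: "\<And>r. r \<in> X \<Longrightarrow> r \<notin> C \<Longrightarrow> r = t" using st(4) by auto
  have memC: "\<And>r. r \<in> C \<Longrightarrow> r \<notin> X \<Longrightarrow> r = s" using st(4) by auto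
  show ?thesis
  proof (cases "u = p")
    case True
    have X: "X = insert v D" using uv(4) True B assms(3) by auto
    have v: "v \<noteq> p" "v \<notin> D" using uv(2) B by auto
    have vq: "v \<noteq> q"
    proof
      assume "v = q"
      then have "X = C" using X C by simp
      then show False using XC tok_irr by metis
    qed
    have "v = t" using memX[of v] X C vq v by auto
    moreover have "q = s" using memC[of q] X C vq v assms(4) by auto
    ultimately have "E q v" using st(3) by simp
    then show ?thesis using X v uv(3) True by blast
  next
    case False
    have uD: "u \<in> D" using False uv(1) B by auto
    have v: "v \<noteq> p" "v \<notin> D" using uv(2) B by auto
    have X: "X = insert v (insert p (D - {u}))" using uv(4) B False by auto
    have pt: "p = t" using memX[of p] X C assms by auto
    have vq: "v = q"
    proof (rule ccontr)
      assume "v \<noteq> q"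
      then have "v = t" using memX[of v] X C v by auto
      then show False using pt v by simp
    qed
    have us: "u = s" using memC[of u] X C uD vq assms(3,4) by auto
    have "E u p" using st(3) us pt by simp
    moreover have "E u q" using uv(3) vq by simp
    moreover have "X = insert p (insert q (D - {u}))" using X vq by auto
    ultimately show ?thesis using uD by blast
  qed
qed

lemma step1:
  assumes A: "A \<in> TV" and "x \<in> A" "y \<notin> A" "y' \<notin> A" "E x y" "E x y'"
  shows "col A (insert y (A - {x})) = col A (insert y' (A - {x}))"
proof (rule ccontr)
  assume ne: "\<not> ?thesis"
  define B where "B = insert y (A - {x})"
  define C where "C = insert y' (A - {x})"
  have yy: "y \<noteq> y'" using ne by auto
  have AB: "T A B" "B \<in> TV" using mv[OF A assms(2,3,5)] B_def by auto
  have AC: "T A C" using mv[OF A assms(2,4,6)] C_def by auto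
  have nE: "\<not> E y y'"
  proof
    assume e: "E y y'"
    have "C = insert y' (B - {y})" using B_def C_def assms(3) by auto
    then have "T B C" using mv[OF AB(2), of y y'] e B_def assms(4) yy by auto
    then show False using R1[OF AB(1) AC] ne B_def C_def by simp
  qed
  obtain X where X: "X \<in> TV" "T X B" "T X C" "X \<noteq> A"
    using R2ex[OF AB(1) AC] ne B_def C_def by auto
  have g: "(\<exists>z. z \<notin> A - {x} \<and> X = insert z (A - {x}) \<and> E y z \<and> E y' z) \<or>
         (\<exists>w\<in>A - {x}. X = insert y (insert y' ((A - {x}) - {w})) \<and> E w y \<and> E w y') \<or> E y y'"
    using gen[OF B_def C_def _ _ yy X(2,3)] assms(3,4) by blast
  show False
  proof -
    { fix z assume z: "z \<notin> A - {x}" "X = insert z (A - {x})" "E y z" "E y' z"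
      have "z \<noteq> x" using z(2) X(4) assms(2) by auto
      then have False using no2[OF sg c4 dm nE yy assms(5,6), of z] z(3,4) sg_sym[OF sg] by blast }
    moreover
    { fix w assume w: "w \<in> A - {x}" "E w y" "E w y'"
      have "w \<noteq> x" using w by auto
      then have False using no2[OF sg c4 dm nE yy assms(5,6) w(2,3)] by blast }
    ultimately show False using g nE by blast
  qed
qed

lemma step2:
  assumes A: "A \<in> TV" and "x \<in> A" "x' \<in> A" "y \<notin> A" "E x y" "E x' y"
  shows "col A (insert y (A - {x})) = col A (insert y (A - {x'}))"
proof (rule ccontr)
  assume ne: "\<not> ?thesis"
  define B where "B = insert y (A - {x})"
  define C where "C = insert y (A - {x'})"
  have xx: "x \<noteq> x'" using ne by auto
  have AB: "T A B" "B \<in> TV" using mv[OF A assms(2,4,5)] B_def by auto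
  have AC: "T A C" using mv[OF A assms(3,4,6)] C_def by auto
  have nE: "\<not> E x x'"
  proof
    assume e: "E x x'"
    have "C = insert x (B - {x'})" using B_def C_def assms(2,3,4) xx by auto
    then have "T B C" using mv[OF AB(2), of x' x] sg_sym[OF sg e] B_def assms(2,3,4) xx by auto
    then show False using R1[OF AB(1) AC] ne B_def C_def by simp
  qed
  obtain X where X: "X \<in> TV" "T X B" "T X C" "X \<noteq> A"
    using R2ex[OF AB(1) AC] ne B_def C_def by auto
  define D where "D = insert y (A - {x, x'})"
  have BD: "B = insert x' D" using B_def D_def xx assms(3) by auto
  have CD: "C = insert x D" using C_def D_def xx assms(2) by auto
  have nD: "x' \<notin> D" "x \<notin> D" using D_def assms(2,3,4) by auto
  have g: "(\<exists>z. z \<notin> D \<and> X = insert z D \<and> E x' z \<and> E x z) \<or>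
         (\<exists>w\<in>D. X = insert x' (insert x (D - {w})) \<and> E w x' \<and> E w x) \<or> E x' x"
    using gen[OF BD CD nD] xx X(2,3) by blast
  have yx: "E y x" "E y x'" using assms(5,6) sg_sym[OF sg] by blast+
  show False
  proof -
    { fix z assume z: "z \<notin> D" "E x' z" "E x z"
      have "z \<noteq> y" using z(1) D_def by auto
      then have False using no2[OF sg c4 dm nE xx yx, of z] z(2,3) sg_sym[OF sg] by blast }
    moreover
    { fix w assume w: "w \<in> D" "X = insert x' (insert x (D - {w}))" "E w x'" "E w x"
      have "w \<noteq> y"
      proof
        assume "w = y"
        then have "X = A" using w(2) D_def assms(2,3,4) by auto
        then show False using X(4) by simp
      qed
      then have False using no2[OF sg c4 dm nE xx yx, of w] w(3,4) by blast }
    ultimately show False using g nE sg_sym[OF sg] by blast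
  qed
qed

lemma transport:
  assumes A: "A \<in> TV" and ab: "a \<in> A" "b \<notin> A" "E a b" and cd: "c \<in> A" "d \<notin> A" "E c d"
    and "a \<noteq> c" "b \<noteq> d"
  shows "col A (insert b (A - {a})) = col (insert d (A - {c})) (insert b (insert d (A - {c}) - {a}))"
proof -
  define P where "P = insert b (A - {a})"
  define Q where "Q = insert d (A - {c})"
  define Y where "Y = insert b (Q - {a})"
  have AP: "T A P" "P \<in> TV" using mv[OF A ab] P_def by auto
  have AQ: "T A Q" "Q \<in> TV" using mv[OF A cd] Q_def by auto
  have QY: "T Q Y" "Y \<in> TV" using mv[OF AQ(2), of a b] ab cd assms(8,9) Q_def Y_def by auto
  have YP: "Y = insert d (P - {c})" using Y_def P_def Q_def assms ab cd by auto
  have PY: "T P Y" using mv[OF AP(2), of c d] cd ab assms(8,9) P_def YP by auto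
  have YA: "Y \<noteq> A" using Y_def ab by auto
  have PQ: "P \<noteq> Q" using P_def Q_def ab assms(9) by auto
  have "col A P = col Q Y"
  proof (cases "col A P = col A Q")
    case False
    have "col Y Q = col A P" using R2'[OF AP(1) AQ(1) False tok_sym[OF sg PY] tok_sym[OF sg QY(1)] YA] by blast
    then show ?thesis using col_sym[of Y Q] by simp
  next
    case True
    show ?thesis
    proof (rule ccontr)
      assume ne: "col A P \<noteq> col Q Y"
      have "col Q A = col A Q" by (rule col_sym)
      then have ne': "col Q A \<noteq> col Q Y" using True ne by simp
      have "col P Y = col Q A \<and> col P A = col Q Y"
        using R2'[OF tok_sym[OF sg AQ(1)] QY(1) ne' tok_sym[OF sg AP(1)] PY PQ] by blast
      moreover have "col P A = col A P" by (rule col_sym)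
      ultimately show False using ne by simp
    qed
  qed
  then show ?thesis using P_def Q_def Y_def by simp
qed

lemma share:
  assumes "A \<in> TV" "a \<in> A" "b \<notin> A" "E a b" "c \<in> A" "d \<notin> A" "E c d" "a = c \<or> b = d"
  shows "col A (insert b (A - {a})) = col A (insert d (A - {c}))"
proof (cases "a = c")
  case True
  then show ?thesis using step1[OF assms(1,2,3), of d] assms(4,6,7) by simp
next
  case False
  then have "b = d" using assms(8) by simp
  then show ?thesis using step2[OF assms(1,2,5,3,4)] assms(7) by simp
qed

lemma mono_m:
  "\<And>A a b c d x. A \<in> TV \<Longrightarrow> a \<in> A \<Longrightarrow> b \<notin> A \<Longrightarrow> E a b \<Longrightarrow> c \<in> A \<Longrightarrow> d \<notin> A \<Longrightarrow> E c d \<Longrightarrow>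
   x = a \<or> x = b \<Longrightarrow> y = c \<or> y = d \<Longrightarrow> (E ^^ m) x y \<Longrightarrow>
   col A (insert b (A - {a})) = col A (insert d (A - {c}))"
proof (induction m)
  case 0
  then have "x = y" by simp
  then have "a = c \<or> b = d" using 0(2,3,5,6,8,9) by blast
  then show ?case using share[OF 0(1-7)] by blast
next
  case (Suc m)
  show ?case
  proof (cases "a = c \<or> b = d")
    case True
    then show ?thesis using share[OF Suc.prems(1-7)] by blast
  next
    case False
    then have ac: "a \<noteq> c" "b \<noteq> d" by auto
    obtain p where p: "E x p" "(E ^^ m) p y" using relpowp_Suc_D2[OF Suc.prems(10)] by blast
    note IH = Suc.IH
    note pr = Suc.prems
    define A' where "A' = insert b (A - {a})"
    have A': "A' \<in> TV" using mv[OF pr(1,2,3,4)] A'_def by auto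
    have bk: "insert a (A' - {b}) = A" using A'_def pr(2,3) by auto
    have bA': "b \<in> A'" "a \<notin> A'" "c \<in> A'" "d \<notin> A'" using A'_def pr ac by auto
    have tr: "col A (insert d (A - {c})) = col A' (insert d (A' - {c}))"
      using transport[OF pr(1) pr(5,6,7) pr(2,3,4)] ac A'_def by auto
    have base: "col A A' = col A' (insert a (A' - {b}))"
      using col_sym[of A A'] bk by simp
    have ba: "E b a" using sg_sym[OF sg pr(4)] .
    show ?thesis
    proof (cases "x = a")
      case xa: True
      show ?thesis
      proof (cases "p \<in> A")
        case False
        have "col A (insert b (A - {a})) = col A (insert p (A - {a}))"
          using step1[OF pr(1,2,3) False pr(4)] p(1) xa by simp
        also have "\<dots> = col A (insert d (A - {c}))"
          using IH[OF pr(1,2) False _ pr(5,6,7) _ pr(9) p(2)] p(1) xa by auto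
        finally show ?thesis .
      next
        case True
        have pa: "p \<noteq> a" using sg_irr[OF sg p(1)] xa by simp
        have pA': "p \<in> A'" using True pa A'_def by auto
        have "col A' (insert a (A' - {b})) = col A' (insert a (A' - {p}))"
          using step2[OF A' bA'(1) pA' bA'(2) ba] p(1) xa sg_sym[OF sg] by blast
        also have "\<dots> = col A' (insert d (A' - {c}))"
          using IH[OF A' pA' bA'(2) _ bA'(3,4) pr(7) _ pr(9) p(2)] p(1) xa sg_sym[OF sg] by blast
        finally have "col A A' = col A (insert d (A - {c}))" using base tr by simp
        then show ?thesis using A'_def by simp
      qed
    next
      case xb: False
      then have xb: "x = b" using pr(8) by simp
      show ?thesis
      proof (cases "p \<in> A")
        case True
        have "col A (insert b (A - {a})) = col A (insert b (A - {p}))"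
          using step2[OF pr(1,2) True pr(3,4)] p(1) xb sg_sym[OF sg] by blast
        also have "\<dots> = col A (insert d (A - {c}))"
          using IH[OF pr(1) True pr(3) _ pr(5,6,7) _ pr(9) p(2)] p(1) xb sg_sym[OF sg] by blast
        finally show ?thesis .
      next
        case False
        have pb: "p \<noteq> b" using sg_irr[OF sg p(1)] xb by simp
        have pA': "p \<notin> A'" using False pb A'_def by auto
        have "col A' (insert a (A' - {b})) = col A' (insert p (A' - {b}))"
          using step1[OF A' bA'(1,2) pA' ba] p(1) xb by blast
        also have "\<dots> = col A' (insert d (A' - {c}))"
          using IH[OF A' bA'(1) pA' _ bA'(3,4) pr(7) _ pr(9) p(2)] p(1) xb by blast
        finally have "col A A' = col A (insert d (A - {c}))" using base tr by simp
        then show ?thesis using A'_def by simp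
      qed
    qed
  qed
qed

lemma mono:
  assumes "T A B" "T A C" shows "col A B = col A C"
proof -
  have A: "A \<in> TV" using assms(1) unfolding token_edges_def by blast
  obtain a b where ab: "a \<in> A" "b \<notin> A" "E a b" "B = insert b (A - {a})"
    using tok_adj[OF sg assms(1)] by blast
  obtain c d where cd: "c \<in> A" "d \<notin> A" "E c d" "C = insert d (A - {c})"
    using tok_adj[OF sg assms(2)] by blast
  have "a \<in> V" "c \<in> V" using sg_in[OF sg] ab cd by blast+
  then have "E\<^sup>*\<^sup>* a c" using cg unfolding connected_graph_def by blast
  then obtain m where "(E ^^ m) a c" using rtranclp_power by metis
  then show ?thesis using mono_m[OF A ab(1,2,3) cd(1,2,3), of a c m] ab(4) cd(4) by simp
qed

lemma allsame_rt:
  assumes "T\<^sup>*\<^sup>* A A'" "T A B" shows "T A' B' \<Longrightarrow> col A B = col A' B'"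
  using assms(1)
proof (induction arbitrary: B' rule: rtranclp_induct)
  case base
  then show ?case using mono assms(2) by blast
next
  case (step X X')
  have "col A B = col X X'" using step.IH step.hyps(2) by blast
  also have "\<dots> = col X' X" using col_sym by blast
  also have "\<dots> = col X' B'" using mono tok_sym[OF sg step.hyps(2)] step.prems by blast
  finally show ?case .
qed

lemma allsame: "T A B \<Longrightarrow> T A' B' \<Longrightarrow> col A B = col A' B'"
  using allsame_rt tok_conn[OF sg cg] unfolding token_edges_def by blast

lemma final:
  assumes "card V1 \<ge> 2" "card V2 \<ge> 2"
  shows False
proof -
  have fin: "finite V1" "finite V2" using s1 s2 unfolding simple_graph_def by auto
  obtain u1 v1 where u: "u1 \<in> V1" "v1 \<in> V1" "u1 \<noteq> v1"
    using assms(1) fin(1) card_le_Suc0_iff_eq[OF fin(1)] by (metis One_nat_def not_less_eq_eq numeral_2_eq_2)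
  obtain u2 v2 where v: "u2 \<in> V2" "v2 \<in> V2" "u2 \<noteq> v2"
    using assms(2) fin(2) card_le_Suc0_iff_eq[OF fin(2)] by (metis One_nat_def not_less_eq_eq numeral_2_eq_2)
  have sur: "\<And>z. z \<in> V1 \<times> V2 \<Longrightarrow> inv_into TV f z \<in> TV \<and> f (inv_into TV f z) = z"
  proof -
    fix z assume "z \<in> V1 \<times> V2"
    then have zi: "z \<in> f ` TV" using bij_betw_imp_surj_on[OF bij] by simp
    show "inv_into TV f z \<in> TV \<and> f (inv_into TV f z) = z" using inv_into_into[OF zi] f_inv_into_f[OF zi] by auto
  qed
  define X where "X = inv_into TV f (u1, u2)"
  define Y where "Y = inv_into TV f (v1, u2)"
  define Z where "Z = inv_into TV f (u1, v2)"
  have X: "X \<in> TV" "f X = (u1, u2)" using sur[of "(u1,u2)"] u v X_def by auto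
  have Y: "Y \<in> TV" "f Y = (v1, u2)" using sur[of "(v1,u2)"] u v Y_def by auto
  have Z: "Z \<in> TV" "f Z = (u1, v2)" using sur[of "(u1,v2)"] u v Z_def by auto
  have "\<exists>P Q. T P Q \<and> col P Q"
  proof (rule ccontr)
    assume "\<not> ?thesis"
    then have "fst (f X) = fst (f Y)" using path_fst tok_conn[OF sg cg X(1) Y(1)] by blast
    then show False using X Y u by simp
  qed
  moreover have "\<exists>P Q. T P Q \<and> \<not> col P Q"
  proof (rule ccontr)
    assume "\<not> ?thesis"
    then have "snd (f X) = snd (f Z)" using path_snd tok_conn[OF sg cg X(1) Z(1)] by blast
    then show False using X Z v by simp
  qed
  ultimately show False using allsame by blast
qed

end

theorem corollary27:
  fixes V :: "'a set" and E :: "'a \<Rightarrow> 'a \<Rightarrow> bool" and k :: nat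
  assumes "simple_graph V E"
    and "connected_graph V E"
    and "C4_free V E"
    and "diamond_free V E"
    and "1 \<le> k" and "k \<le> card V - 1"
  shows "prime_graph (token_vertices V k) (token_edges V E k)"
proof -
  have False if comp: "composite_graph (token_vertices V k) (token_edges V E k)"
  proof -
    obtain V1 :: "nat set" and E1 :: "nat \<Rightarrow> nat \<Rightarrow> bool" and V2 :: "nat set" and E2 :: "nat \<Rightarrow> nat \<Rightarrow> bool" and f where
      nt: "nontrivial_graph V1 E1" "nontrivial_graph V2 E2"
      and bj: "bij_betw f (token_vertices V k) (V1 \<times> V2)"
      and ad: "\<forall>x\<in>token_vertices V k. \<forall>y\<in>token_vertices V k.
                token_edges V E k x y \<longleftrightarrow> cart_edges E1 E2 (f x) (f y)"
      using comp unfolding composite_graph_def graph_iso_def by blast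
    have "tokprod V E k V1 E1 V2 E2 f"
      unfolding tokprod_def tokprod_axioms_def prodiso_def
      using nt bj ad assms(1-4) unfolding nontrivial_graph_def token_edges_def by blast
    then interpret tp: tokprod V E k V1 E1 V2 E2 f .
    show False using tp.final nt unfolding nontrivial_graph_def by blast
  qed
  then show ?thesis unfolding prime_graph_def by blast
qed

end
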